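(* Let $2<\gamma<3$ and let $k=k(n)$ satisfy $k=o(n)$. Then, as $n\to\infty$, \[h_n-\sum_{i=k}^{n-1}\left(\frac{i/n}{1-i/n}-\log\left(1+\frac{i/n}{1-i/n}\right)\right)\left(\frac ni\right)^{\gamma}\cdot\frac1n=\sum_{i=1}^{\infty}\left(\frac1i-\frac{i}{(i+1)(i+2-\gamma)}\right)+o(1),\] where $h_n=\sum_{j=1}^n 1/j$. *)

theory Defs
  imports "HOL-Analysis.Analysis" "HOL-Library.Landau_Symbols"
begin

end

theory Submission
  imports Defs
begin


lemma mvt_pow:
  fixes u q :: real
  assumes "u > 0" "q > 0"
  shows "\<exists>z. u < z \<and> z < u + 1 \<and> (u+1) powr q - u powr q = q * z powr (q - 1)"
proof -
  have "\<exists>z. u < z \<and> z < u + 1 \<and> ((u+1) powr q - u powr q = ((u+1) - u) * (q * z powr (q - 1)))"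
    by (rule MVT2) (use assms in \<open>auto intro!: has_real_derivative_powr\<close>)
  then show ?thesis by auto
qed

lemma step_bounds:
  fixes p u :: real
  assumes "p > -1" "u \<ge> 1"
  shows "p \<ge> 0 \<Longrightarrow> (p+1) * u powr p \<le> (u+1) powr (p+1) - u powr (p+1)
                    \<and> u powr (p+1) - (u-1) powr (p+1) \<le> (p+1) * u powr p"
    and "p \<le> 0 \<Longrightarrow> (p+1) * u powr p \<ge> (u+1) powr (p+1) - u powr (p+1)
                    \<and> u powr (p+1) - (u-1) powr (p+1) \<ge> (p+1) * u powr p"
proof -
  obtain z where z: "u < z" "z < u + 1" "(u+1) powr (p+1) - u powr (p+1) = (p+1) * z powr p"
    using mvt_pow[of u "p+1"] assms by auto
  have lo: "u powr (p+1) - (u-1) powr (p+1) = 1" if "u = 1" using that by simp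
  have "\<exists>w. u - 1 < w \<and> w < u \<and> u powr (p+1) - (u-1) powr (p+1) = (p+1) * w powr p" if "u > 1"
    using mvt_pow[of "u-1" "p+1"] assms that by auto
  then have lo2: "u > 1 \<Longrightarrow> \<exists>w. 0 < w \<and> w \<le> u \<and> u powr (p+1) - (u-1) powr (p+1) = (p+1) * w powr p"
    by (metis diff_gt_0_iff_gt less_eq_real_def less_trans)
  show "p \<ge> 0 \<Longrightarrow> (p+1) * u powr p \<le> (u+1) powr (p+1) - u powr (p+1)
                    \<and> u powr (p+1) - (u-1) powr (p+1) \<le> (p+1) * u powr p"
  proof
    assume p: "p \<ge> 0"
    have "u powr p \<le> z powr p" using p z assms by (intro powr_mono2) auto
    then show "(p+1) * u powr p \<le> (u+1) powr (p+1) - u powr (p+1)" using z p by simp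
    show "u powr (p+1) - (u-1) powr (p+1) \<le> (p+1) * u powr p"
    proof (cases "u = 1")
      case True then show ?thesis using p by simp
    next
      case False
      then obtain w where w: "0 < w" "w \<le> u" "u powr (p+1) - (u-1) powr (p+1) = (p+1) * w powr p"
        using lo2 assms by force
      have "w powr p \<le> u powr p" using p w by (intro powr_mono2) auto
      then show ?thesis using w p by simp
    qed
  qed
  show "p \<le> 0 \<Longrightarrow> (p+1) * u powr p \<ge> (u+1) powr (p+1) - u powr (p+1)
                    \<and> u powr (p+1) - (u-1) powr (p+1) \<ge> (p+1) * u powr p"
  proof
    assume p: "p \<le> 0"
    have "z powr p \<le> u powr p" using p z assms by (intro powr_mono2') auto
    then show "(p+1) * u powr p \<ge> (u+1) powr (p+1) - u powr (p+1)" using z p assms by simp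
    show "u powr (p+1) - (u-1) powr (p+1) \<ge> (p+1) * u powr p"
    proof (cases "u = 1")
      case True then show ?thesis using p by simp
    next
      case False
      then obtain w where w: "0 < w" "w \<le> u" "u powr (p+1) - (u-1) powr (p+1) = (p+1) * w powr p"
        using lo2 assms by force
      have "u powr p \<le> w powr p" using p w by (intro powr_mono2') auto
      then show ?thesis using w p assms by simp
    qed
  qed
qed

definition Spow :: "real \<Rightarrow> nat \<Rightarrow> real" where
  "Spow p n = (\<Sum>i\<in>{1..<n}. real i powr p)"

lemma Spow_bounds:
  fixes p :: real
  assumes "p > -1"
  shows "p \<ge> 0 \<Longrightarrow> (p+1) * Spow p (Suc m) \<le> real (Suc m) powr (p+1) - 1
                    \<and> real m powr (p+1) \<le> (p+1) * Spow p (Suc m)"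
    and "p \<le> 0 \<Longrightarrow> (p+1) * Spow p (Suc m) \<le> real m powr (p+1)
                    \<and> real (Suc m) powr (p+1) - 1 \<le> (p+1) * Spow p (Suc m)"
proof -
  have rec: "Spow p (Suc (Suc m)) = Spow p (Suc m) + real (Suc m) powr p" for m
    unfolding Spow_def by simp
  show "p \<ge> 0 \<Longrightarrow> (p+1) * Spow p (Suc m) \<le> real (Suc m) powr (p+1) - 1
                    \<and> real m powr (p+1) \<le> (p+1) * Spow p (Suc m)"
  proof (induction m)
    case 0 then show ?case by (simp add: Spow_def)
  next
    case (Suc m)
    have b: "(p+1) * real (Suc m) powr p \<le> (real (Suc m)+1) powr (p+1) - real (Suc m) powr (p+1)
          \<and> real (Suc m) powr (p+1) - (real (Suc m)-1) powr (p+1) \<le> (p+1) * real (Suc m) powr p"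
      using step_bounds(1)[OF assms, of "real (Suc m)"] Suc.prems by simp
    show ?case using Suc b unfolding rec by (simp add: algebra_simps add.commute)
  qed
  show "p \<le> 0 \<Longrightarrow> (p+1) * Spow p (Suc m) \<le> real m powr (p+1)
                    \<and> real (Suc m) powr (p+1) - 1 \<le> (p+1) * Spow p (Suc m)"
  proof (induction m)
    case 0 then show ?case by (simp add: Spow_def)
  next
    case (Suc m)
    have b: "(p+1) * real (Suc m) powr p \<ge> (real (Suc m)+1) powr (p+1) - real (Suc m) powr (p+1)
          \<and> real (Suc m) powr (p+1) - (real (Suc m)-1) powr (p+1) \<ge> (p+1) * real (Suc m) powr p"
      using step_bounds(2)[OF assms, of "real (Suc m)"] Suc.prems by simp
    show ?case using Suc b unfolding rec by (simp add: algebra_simps add.commute)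
  qed
qed

definition Rs :: "real \<Rightarrow> nat \<Rightarrow> real" where
  "Rs p n = (\<Sum>i\<in>{1..<n}. (real i / real n) powr p) / real n"

lemma Rs_Spow: "Rs p n = Spow p n / real n powr (p+1)"
proof (cases "n = 0")
  case True then show ?thesis by (simp add: Rs_def Spow_def)
next
  case False
  have "Rs p n = (\<Sum>i\<in>{1..<n}. real i powr p / real n powr p) / real n"
    unfolding Rs_def by (intro arg_cong2[where f="(/)"] sum.cong refl) (simp add: powr_divide)
  also have "\<dots> = Spow p n / (real n powr p * real n)"
    by (simp add: Spow_def sum_divide_distrib)
  also have "real n powr p * real n = real n powr (p+1)"
    using False by (simp add: powr_add)
  finally show ?thesis .
qed

lemma Rs_le:
  assumes "p > -1"
  shows "Rs p n \<le> 1 / (p+1)"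
proof (cases n)
  case 0 then show ?thesis using assms by (simp add: Rs_def)
next
  case (Suc m)
  have pos: "real n powr (p+1) > 0" using Suc by simp
  have "(p+1) * Spow p n \<le> real n powr (p+1)"
  proof (cases "p \<ge> 0")
    case True then show ?thesis using Spow_bounds(1)[OF assms, of m] Suc by simp
  next
    case False
    then have "(p+1) * Spow p n \<le> real m powr (p+1)" using Spow_bounds(2)[OF assms, of m] Suc by simp
    also have "\<dots> \<le> real n powr (p+1)" using Suc assms by (intro powr_mono2) auto
    finally show ?thesis .
  qed
  then show ?thesis using pos assms unfolding Rs_Spow by (simp add: field_simps)
qed

lemma Rs_lim:
  assumes "p > -1"
  shows "(\<lambda>n. Rs p n) \<longlonglongrightarrow> 1 / (p+1)"
proof -
  have q: "p + 1 > 0" using assms by simp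
  show ?thesis
  proof (cases "p \<ge> 0")
    case True
    have lo: "((real n - 1) / real n) powr (p+1) / (p+1) \<le> Rs p n" if n1: "n \<ge> 1" for n
    proof -
      obtain m where m: "n = Suc m" using n1 by (cases n) auto
      have "real m powr (p+1) \<le> (p+1) * Spow p n" using Spow_bounds(1)[OF assms True, of m] m by simp
      then have "real m powr (p+1) / (p+1) \<le> Spow p n"
        using q by (simp add: pos_divide_le_eq mult.commute)
      then have "real m powr (p+1) / (p+1) / real n powr (p+1) \<le> Spow p n / real n powr (p+1)"
        by (rule divide_right_mono) simp
      moreover have "real m powr (p+1) / (p+1) / real n powr (p+1) = ((real n - 1) / real n) powr (p+1) / (p+1)"
        using m by (simp add: powr_divide)
      ultimately show ?thesis by (simp add: Rs_Spow)
    qed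
    have "(\<lambda>n. ((real n - 1) / real n) powr (p+1) / (p+1)) \<longlonglongrightarrow> 1 powr (p+1) / (p+1)"
    proof (intro tendsto_intros)
      have "(\<lambda>n. 1 - 1 / real n) \<longlonglongrightarrow> 1 - 0"
        by (intro tendsto_intros lim_inverse_n')
      moreover have "eventually (\<lambda>n. 1 - 1 / real n = (real n - 1) / real n) sequentially"
        using eventually_gt_at_top[of 0] by eventually_elim (simp add: field_simps)
      ultimately show "(\<lambda>n. (real n - 1) / real n) \<longlonglongrightarrow> 1"
        using Lim_transform_eventually by fastforce
    qed (use q in auto)
    then have "(\<lambda>n. ((real n - 1) / real n) powr (p+1) / (p+1)) \<longlonglongrightarrow> 1 / (p+1)" by simp
    then show ?thesis
      apply (rule tendsto_sandwich[rotated 2])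
        apply (rule tendsto_const)
       apply (rule eventually_mono[OF eventually_ge_at_top[of 1]])
       apply (erule lo)
      apply (rule always_eventually)
      using Rs_le[OF assms] by blast
  next
    case False
    have lo: "(1 - real n powr (-(p+1))) / (p+1) \<le> Rs p n" if n1: "n \<ge> 1" for n
    proof -
      obtain m where m: "n = Suc m" using n1 by (cases n) auto
      have "real n powr (p+1) - 1 \<le> (p+1) * Spow p n" using Spow_bounds(2)[OF assms, of m] False m by simp
      then have "(real n powr (p+1) - 1) / (p+1) \<le> Spow p n"
        using q by (simp add: pos_divide_le_eq mult.commute)
      then have "(real n powr (p+1) - 1) / (p+1) / real n powr (p+1) \<le> Spow p n / real n powr (p+1)"
        by (rule divide_right_mono) simp
      moreover have "(real n powr (p+1) - 1) / (p+1) / real n powr (p+1) = (1 - real n powr (-(p+1))) / (p+1)"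
      proof -
        have N: "real n powr (p+1) > 0" using m by simp
        have inv: "real n powr (-(p+1)) = 1 / real n powr (p+1)" by (rule powr_minus_divide)
        have gen: "\<And>N::real. N > 0 \<Longrightarrow> (N - 1) / (p+1) / N = (1 - 1/N) / (p+1)"
          using q by (simp add: field_simps)
        show ?thesis unfolding inv by (rule gen[OF N])
      qed
      ultimately show ?thesis by (simp add: Rs_Spow)
    qed
    have "(\<lambda>n. (1 - real n powr (-(p+1))) / (p+1)) \<longlonglongrightarrow> (1 - 0) / (p+1)"
      by (intro tendsto_intros tendsto_neg_powr filterlim_real_sequentially) (use q in auto)
    then have "(\<lambda>n. (1 - real n powr (-(p+1))) / (p+1)) \<longlonglongrightarrow> 1 / (p+1)" by simp
    then show ?thesis
      apply (rule tendsto_sandwich[rotated 2])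
        apply (rule tendsto_const)
       apply (rule eventually_mono[OF eventually_ge_at_top[of 1]])
       apply (erule lo)
      apply (rule always_eventually)
      using Rs_le[OF assms] by blast
  qed
qed

lemma unif_tail:
  fixes f :: "nat \<Rightarrow> nat \<Rightarrow> real" and s l e :: "nat \<Rightarrow> real"
  assumes lim: "\<And>m. (\<lambda>n. f n m) \<longlonglongrightarrow> l m"
    and tail: "\<And>M n. n \<ge> 1 \<Longrightarrow> \<bar>s n - (\<Sum>m<M. f n m)\<bar> \<le> e M"
    and e: "e \<longlonglongrightarrow> 0" and sl: "summable l"
  shows "s \<longlonglongrightarrow> suminf l"
proof (rule LIMSEQ_I)
  fix r :: real assume r: "r > 0"
  have ev1: "eventually (\<lambda>M. e M < r/3) sequentially"
    using order_tendstoD(2)[OF e, of "r/3"] r by simp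
  have t1: "(\<lambda>M. \<Sum>m<M. l m) \<longlonglongrightarrow> suminf l" using summable_LIMSEQ[OF sl] .
  have ev2: "eventually (\<lambda>M. \<bar>(\<Sum>m<M. l m) - suminf l\<bar> < r/3) sequentially"
    using r tendsto_iff[THEN iffD1, OF t1, rule_format, of "r/3"] by (simp add: dist_real_def)
  obtain M where M: "e M < r/3" "\<bar>(\<Sum>m<M. l m) - suminf l\<bar> < r/3"
    using eventually_happens'[OF _ eventually_conj[OF ev1 ev2]] by auto
  have t1: "(\<lambda>n. \<Sum>m<M. f n m) \<longlonglongrightarrow> (\<Sum>m<M. l m)" by (intro tendsto_sum lim)
  have "eventually (\<lambda>n. \<bar>(\<Sum>m<M. f n m) - (\<Sum>m<M. l m)\<bar> < r/3) sequentially"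
    using r tendsto_iff[THEN iffD1, OF t1, rule_format, of "r/3"] by (simp add: dist_real_def)
  then obtain no where no: "\<And>n. n \<ge> no \<Longrightarrow> \<bar>(\<Sum>m<M. f n m) - (\<Sum>m<M. l m)\<bar> < r/3"
    by (auto simp: eventually_sequentially)
  show "\<exists>no. \<forall>n\<ge>no. norm (s n - suminf l) < r"
  proof (intro exI allI impI)
    fix n assume n: "n \<ge> max no 1"
    have "\<bar>s n - (\<Sum>m<M. f n m)\<bar> \<le> e M" using tail n by auto
    moreover have "\<bar>(\<Sum>m<M. f n m) - (\<Sum>m<M. l m)\<bar> < r/3" using no[of n] n by simp
    ultimately show "norm (s n - suminf l) < r" using M unfolding real_norm_def abs_le_iff abs_less_iff by linarith
  qed
qed

definition phi :: "real \<Rightarrow> real \<Rightarrow> real" where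
  "phi a x = (x powr a - 1) / (1 - x)"

definition psi :: "real \<Rightarrow> real \<Rightarrow> real" where
  "psi a x = x powr (a - 2) * (- ln (1 - x) - x)"

lemma psi_sums:
  assumes "0 < x" "x < 1"
  shows "(\<lambda>m. x powr (real m + a) / (real m + 2)) sums psi a x"
proof -
  have "(\<lambda>n. - ((-(-x))^n) / of_nat n) sums ln (1 + (-x))"
    by (rule ln_series') (use assms in auto)
  then have "(\<lambda>n. - (x^n / real n)) sums ln (1 - x)" by simp
  then have "(\<lambda>n. x^n / real n) sums (- ln (1 - x))"
    using sums_minus by fastforce
  then have "(\<lambda>m. x^(m+2) / real (m+2)) sums (- ln (1 - x) - (\<Sum>i<2. x^i / real i))"
    by (rule sums_split_initial_segment)
  then have "(\<lambda>m. x^(m+2) / real (m+2)) sums (- ln (1 - x) - x)"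
    by (simp add: eval_nat_numeral)
  then have "(\<lambda>m. x powr (a - 2) * (x^(m+2) / real (m+2))) sums (x powr (a - 2) * (- ln (1 - x) - x))"
    by (rule sums_mult)
  moreover have "x powr (a - 2) * (x^(m+2) / real (m+2)) = x powr (real m + a) / (real m + 2)" for m
  proof -
    have "x^(m+2) = x powr (real (m+2))" using assms by (simp only: powr_realpow)
    then have "x powr (a - 2) * x^(m+2) = x powr (a - 2) * x powr (real m + 2)"
      by (simp add: add.commute)
    also have "\<dots> = x powr (real m + a)" by (simp add: powr_add[symmetric] add.commute)
    finally show ?thesis by simp
  qed
  ultimately show ?thesis unfolding psi_def by simp
qed

lemma phi_partial:
  assumes "0 < x" "x < 1"
  shows "phi a x - (\<Sum>m<M. x powr (real m + a) - x powr real m) = x^M * phi a x"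
proof -
  have "(\<Sum>m<M. x powr (real m + a) - x powr real m) = (\<Sum>m<M. (x powr a - 1) * x^m)"
    using assms by (intro sum.cong refl) (simp add: powr_add powr_realpow algebra_simps)
  also have "\<dots> = (x powr a - 1) * ((1 - x^M) / (1 - x))"
    using assms by (simp add: sum_distrib_left[symmetric] sum_gp_strict)
  finally show ?thesis using assms unfolding phi_def by (simp add: field_simps)
qed

lemma phi_bounds:
  assumes "0 < x" "x < 1" "-1 < a" "a < 0"
  shows "0 \<le> x^M * phi a x" "x^M * phi a x \<le> x powr (real M + a)"
proof -
  have "x powr a \<ge> 1" using powr_mono2'[of a x 1] assms by simp
  then show "0 \<le> x^M * phi a x" using assms unfolding phi_def by simp
  have "x powr (a + 1) \<le> 1" using assms by (intro powr_le1) auto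
  then have "x powr a * x \<le> 1" using assms by (simp add: powr_add)
  then have "phi a x \<le> x powr a" using assms unfolding phi_def by (simp add: field_simps)
  then have "x^M * phi a x \<le> x^M * x powr a" using assms by (intro mult_left_mono) auto
  also have "\<dots> = x powr (real M + a)" using assms by (simp add: powr_add powr_realpow)
  finally show "x^M * phi a x \<le> x powr (real M + a)" .
qed

lemma xi_bounds: "i \<in> {1..<n} \<Longrightarrow> 0 < real i / real n \<and> real i / real n < 1"
  by (auto simp: field_simps)

lemma Rs_nonneg: "Rs p n \<ge> 0"
  unfolding Rs_def by (intro divide_nonneg_nonneg sum_nonneg) auto

lemma W_tail:
  assumes "-1 < a" "a < 0"
  shows "0 \<le> (\<Sum>i\<in>{1..<n}. phi a (real i / real n)) / real n - (\<Sum>m<M. Rs (real m + a) n - Rs (real m) n)"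
    and "(\<Sum>i\<in>{1..<n}. phi a (real i / real n)) / real n - (\<Sum>m<M. Rs (real m + a) n - Rs (real m) n)
          \<le> 1 / (real M + a + 1)"
proof -
  have "(\<Sum>m<M. Rs (real m + a) n - Rs (real m) n)
      = (\<Sum>m<M. (\<Sum>i\<in>{1..<n}. (real i / real n) powr (real m + a) - (real i / real n) powr real m) / real n)"
    unfolding Rs_def by (simp add: sum_subtractf diff_divide_distrib)
  also have "\<dots> = (\<Sum>i\<in>{1..<n}. (\<Sum>m<M. (real i / real n) powr (real m + a) - (real i / real n) powr real m)) / real n"
    by (simp add: sum_divide_distrib[symmetric] sum.swap[of _ "{..<M}"])
  finally have eq: "(\<Sum>i\<in>{1..<n}. phi a (real i / real n)) / real n - (\<Sum>m<M. Rs (real m + a) n - Rs (real m) n)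
      = (\<Sum>i\<in>{1..<n}. (real i / real n)^M * phi a (real i / real n)) / real n"
    using phi_partial xi_bounds by (simp add: diff_divide_distrib[symmetric] sum_subtractf[symmetric])
  show "0 \<le> (\<Sum>i\<in>{1..<n}. phi a (real i / real n)) / real n - (\<Sum>m<M. Rs (real m + a) n - Rs (real m) n)"
    unfolding eq using phi_bounds(1) xi_bounds assms by (intro divide_nonneg_nonneg sum_nonneg) auto
  have "(\<Sum>i\<in>{1..<n}. (real i / real n)^M * phi a (real i / real n)) / real n \<le> Rs (real M + a) n"
    unfolding Rs_def using phi_bounds(2) xi_bounds assms by (intro divide_right_mono sum_mono) auto
  also have "\<dots> \<le> 1 / (real M + a + 1)" using Rs_le[of "real M + a" n] assms by simp
  finally show "(\<Sum>i\<in>{1..<n}. phi a (real i / real n)) / real n - (\<Sum>m<M. Rs (real m + a) n - Rs (real m) n)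
          \<le> 1 / (real M + a + 1)" unfolding eq .
qed

lemma P_sums:
  "(\<lambda>m. Rs (real m + a) n / (real m + 2)) sums ((\<Sum>i\<in>{1..<n}. psi a (real i / real n)) / real n)"
proof -
  have "(\<lambda>m. \<Sum>i\<in>{1..<n}. (real i / real n) powr (real m + a) / (real m + 2)) sums (\<Sum>i\<in>{1..<n}. psi a (real i / real n))"
    by (intro sums_sum psi_sums) (auto dest: xi_bounds)
  then have "(\<lambda>m. (\<Sum>i\<in>{1..<n}. (real i / real n) powr (real m + a) / (real m + 2)) / real n) sums ((\<Sum>i\<in>{1..<n}. psi a (real i / real n)) / real n)"
    by (rule sums_divide)
  moreover have "(\<Sum>i\<in>{1..<n}. (real i / real n) powr (real m + a) / (real m + 2)) / real n = Rs (real m + a) n / (real m + 2)" for m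
    unfolding Rs_def by (simp add: sum_divide_distrib[symmetric])
  ultimately show ?thesis by simp
qed

lemma tele:
  assumes "-1 < a"
  shows "(\<lambda>j. 1 / (real (j + M) + a + 1) - 1 / (real (j + M) + a + 2)) sums (1 / (real M + a + 1))"
proof -
  have "(\<lambda>j. 1 / (real j + real M + a + 1)) \<longlonglongrightarrow> 0"
  proof -
    have "(\<lambda>j. 1 / ((real M + a + 1) + real j)) \<longlonglongrightarrow> 0"
      by (intro tendsto_divide_0[OF tendsto_const] filterlim_at_top_imp_at_infinity
             filterlim_tendsto_add_at_top[OF tendsto_const filterlim_real_sequentially])
    then show ?thesis by (simp add: add_ac)
  qed
  from telescope_sums'[OF this] show ?thesis by (simp add: add_ac)
qed

lemma P_tail:
  assumes "-1 < a" "a < 0"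
  shows "0 \<le> (\<Sum>i\<in>{1..<n}. psi a (real i / real n)) / real n - (\<Sum>m<M. Rs (real m + a) n / (real m + 2))"
    and "(\<Sum>i\<in>{1..<n}. psi a (real i / real n)) / real n - (\<Sum>m<M. Rs (real m + a) n / (real m + 2))
          \<le> 1 / (real M + a + 1)"
proof -
  have s: "(\<lambda>j. Rs (real (j + M) + a) n / (real (j + M) + 2)) sums
     ((\<Sum>i\<in>{1..<n}. psi a (real i / real n)) / real n - (\<Sum>m<M. Rs (real m + a) n / (real m + 2)))"
    using sums_split_initial_segment[OF P_sums[of a n], of M] by simp
  show "0 \<le> (\<Sum>i\<in>{1..<n}. psi a (real i / real n)) / real n - (\<Sum>m<M. Rs (real m + a) n / (real m + 2))"
    using sums_le[OF _ sums_zero s] Rs_nonneg by (simp add: divide_nonneg_nonneg)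
  have le: "Rs (real (j + M) + a) n / (real (j + M) + 2) \<le> 1 / (real (j + M) + a + 1) - 1 / (real (j + M) + a + 2)" for j
  proof -
    define y where "y = real (j + M)"
    have y: "y \<ge> 0" unfolding y_def by simp
    have "Rs (y + a) n \<le> 1 / (y + a + 1)" using Rs_le[of "y+a" n] assms y by simp
    then have "Rs (y + a) n / (y + 2) \<le> 1 / (y + a + 1) / (y + 2)"
      using y by (intro divide_right_mono) auto
    also have "\<dots> \<le> 1 / (y + a + 1) / (y + a + 2)"
      using y assms by (intro divide_left_mono) (auto intro: mult_pos_pos)
    also have "\<dots> = 1 / (y + a + 1) - 1 / (y + a + 2)"
      using y assms by (simp add: field_simps)
    finally show ?thesis unfolding y_def .
  qed
  show "(\<Sum>i\<in>{1..<n}. psi a (real i / real n)) / real n - (\<Sum>m<M. Rs (real m + a) n / (real m + 2))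
          \<le> 1 / (real M + a + 1)"
    by (rule sums_le[OF le s tele[OF assms(1)]])
qed

lemma ln_aux: "0 < x \<Longrightarrow> x < (1::real) \<Longrightarrow> ln (1 + x / (1 - x)) = - ln (1 - x)"
proof -
  assume x: "0 < x" "x < 1"
  have "1 + x / (1 - x) = inverse (1 - x)" using x by (simp add: field_simps)
  then show ?thesis using x by (simp add: ln_inverse)
qed

lemma term_id:
  fixes x g :: real
  assumes "0 < x" "x < 1"
  shows "1 / (1 - x) - (x / (1 - x) - ln (1 + x / (1 - x))) * (1 / x) powr g
         = psi (2 - g) x - phi (2 - g) x"
proof -
  define y where "y = x powr (- g)"
  have y1: "(1 / x) powr g = y" unfolding y_def using assms
    by (simp add: powr_divide powr_minus_divide)
  have y2: "x powr (2 - g) = x^2 * y"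
  proof -
    have "x powr (2 - g) = x powr 2 * x powr (- g)" by (simp add: powr_add[symmetric])
    then show ?thesis unfolding y_def using assms by (simp add: powr_numeral)
  qed
  have y3: "x powr (2 - g - 2) = y" unfolding y_def by simp
  have L: "ln (1 + x / (1 - x)) = - ln (1 - x)" using ln_aux assms by simp
  have gen: "\<And>l. 1 / (1 - x) - (x / (1 - x) - - l) * y = y * (- l - x) - (x^2 * y - 1) / (1 - x)"
    using assms by (simp add: field_simps power2_eq_square)
  show ?thesis unfolding psi_def phi_def y1 y2 y3 L by (rule gen)
qed

lemma T_bounds:
  fixes x g :: real
  assumes "0 < x" "x \<le> 1/2"
  shows "0 \<le> (x / (1 - x) - ln (1 + x / (1 - x))) * (1 / x) powr g"
    and "(x / (1 - x) - ln (1 + x / (1 - x))) * (1 / x) powr g \<le> 2 * x powr (2 - g)"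
proof -
  have x1: "x < 1" using assms by simp
  have "ln (1 + x / (1 - x)) \<le> x / (1 - x)"
    using assms x1 by (intro ln_add_one_self_le_self) auto
  then show "0 \<le> (x / (1 - x) - ln (1 + x / (1 - x))) * (1 / x) powr g" by simp
  have "ln (1 - x) \<le> - x" using assms x1 by (intro ln_one_minus_pos_upper_bound) auto
  then have "x / (1 - x) - ln (1 + x / (1 - x)) \<le> x / (1 - x) - x"
    using ln_aux[OF assms(1) x1] by simp
  also have "\<dots> = x^2 / (1 - x)" using x1 by (simp add: field_simps power2_eq_square)
  also have "\<dots> \<le> 2 * x^2" using assms x1 by (simp add: field_simps)
  finally have A: "x / (1 - x) - ln (1 + x / (1 - x)) \<le> 2 * x^2" .
  have B: "(1 / x) powr g \<ge> 0" by simp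
  have "(x / (1 - x) - ln (1 + x / (1 - x))) * (1 / x) powr g \<le> 2 * x^2 * (1 / x) powr g"
    using A B by (rule mult_right_mono)
  also have "2 * x^2 * (1 / x) powr g = 2 * x powr (2 - g)"
  proof -
    have "x powr (2 - g) = x powr 2 / x powr g" by (rule powr_diff)
    then show ?thesis using assms by (simp add: powr_numeral powr_divide)
  qed
  finally show "(x / (1 - x) - ln (1 + x / (1 - x))) * (1 / x) powr g \<le> 2 * x powr (2 - g)" .
qed



lemma harm_split:
  assumes "n \<ge> 1"
  shows "(harm n :: real) = 1 / real n + (\<Sum>i\<in>{1..<n}. 1 / (real n - real i))"
proof -
  obtain m where m: "n = Suc m" using assms by (cases n) auto
  have "(\<Sum>i\<in>{1..<n}. 1 / (real n - real i)) = (\<Sum>i\<in>{1..m}. 1 / (real (Suc m) - real i))"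
    unfolding m by (simp add: atLeastLessThanSuc_atLeastAtMost)
  also have "\<dots> = (\<Sum>i\<in>{1..m}. 1 / (real (Suc m) - real (m + 1 - i)))"
    by (rule sum.atLeastAtMost_rev)
  also have "\<dots> = (\<Sum>i\<in>{1..m}. inverse (real i))"
    by (intro sum.cong refl) (auto simp: of_nat_diff divide_inverse)
  also have "\<dots> = harm m" by (simp add: harm_def)
  finally show ?thesis unfolding m by (simp add: harm_Suc divide_inverse)
qed

lemma l_bound:
  fixes y a :: real
  assumes "y \<ge> 0" "-1 < a" "a < 0"
  shows "\<bar>1/(y + a + 1)/(y + 2) - (1/(y + a + 1) - 1/(y + 1))\<bar> \<le> 3 * (1/(y + a + 1) - 1/(y + a + 2))"
proof -
  have p1: "y + a + 1 > 0" "y + a + 2 > 0" "y + 1 > 0" "y + 2 > 0" using assms by auto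
  have A0: "0 \<le> 1/(y + a + 1)/(y + 2)" using p1 by simp
  have A1: "1/(y + a + 1)/(y + 2) \<le> 1/(y + a + 1) - 1/(y + a + 2)"
  proof -
    have "1/(y + a + 1)/(y + 2) \<le> 1/(y + a + 1)/(y + a + 2)"
      using p1 assms by (intro divide_left_mono) auto
    also have "\<dots> = 1/(y + a + 1) - 1/(y + a + 2)" using p1 by (simp add: field_simps)
    finally show ?thesis .
  qed
  have B0: "0 \<le> 1/(y + a + 1) - 1/(y + 1)" using p1 assms by (simp add: frac_le)
  have B1: "1/(y + a + 1) - 1/(y + 1) \<le> 2 * (1/(y + a + 1) - 1/(y + a + 2))"
  proof -
    have e1: "1/(y + a + 1) - 1/(y + 1) = - a / ((y + a + 1) * (y + 1))" using p1 by (simp add: field_simps)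
    have e2: "2 * (1/(y + a + 1) - 1/(y + a + 2)) = 2 / ((y + a + 1) * (y + a + 2))" using p1 by (simp add: field_simps)
    have "- a * (y + a + 2) \<le> 1 * (y + a + 2)" using assms p1
      by (intro mult_right_mono) auto
    also have "\<dots> \<le> 2 * (y + 1)" using assms by simp
    finally have h0: "- a * (y + a + 2) \<le> 2 * (y + 1)" .
    have f1: "- a / ((y + a + 1) * (y + 1)) = (- a * (y + a + 2)) / ((y + a + 1) * (y + 1) * (y + a + 2))"
      using p1 by simp
    have f2: "2 / ((y + a + 1) * (y + a + 2)) = (2 * (y + 1)) / ((y + a + 1) * (y + 1) * (y + a + 2))"
      using p1 by (metis (no_types, lifting) less_irrefl mult.commute mult.left_commute mult_divide_mult_cancel_left)
    have "- a / ((y + a + 1) * (y + 1)) \<le> 2 / ((y + a + 1) * (y + a + 2))"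
      unfolding f1 f2 using p1 h0 by (intro divide_right_mono) auto
    then show ?thesis using e1 e2 by simp
  qed
  have gen: "\<And>A B t::real. 0 \<le> A \<Longrightarrow> A \<le> t \<Longrightarrow> 0 \<le> B \<Longrightarrow> B \<le> 2 * t \<Longrightarrow> \<bar>A - B\<bar> \<le> 3 * t"
    unfolding abs_le_iff by linarith
  show ?thesis by (rule gen[OF A0 A1 B0 B1])
qed



lemma K_bound:
  fixes a :: real and n K :: nat
  assumes "-1 < a" "a < 0" "n \<ge> 1"
  shows "(\<Sum>i\<in>{1..<K}. 2 * (real i / real n) powr a * (1 / real n))
          \<le> 2 / (a + 1) * (real K / real n) powr (a + 1)"
proof -
  have "(\<Sum>i\<in>{1..<K}. 2 * (real i / real n) powr a * (1 / real n))
      = 2 * Spow a K / real n powr (a + 1)"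
  proof -
    have "(\<Sum>i\<in>{1..<K}. 2 * (real i / real n) powr a * (1 / real n))
        = (\<Sum>i\<in>{1..<K}. 2 * (real i powr a / (real n powr a * real n)))"
      by (intro sum.cong refl) (simp add: powr_divide)
    also have "\<dots> = 2 * Spow a K / (real n powr a * real n)"
      unfolding Spow_def by (simp add: sum_distrib_left sum_divide_distrib)
    also have "real n powr a * real n = real n powr (a + 1)"
      using assms by (simp add: powr_add)
    finally show ?thesis .
  qed
  also have "\<dots> \<le> 2 * (real K powr (a + 1) / (a + 1)) / real n powr (a + 1)"
  proof -
    have "(a + 1) * Spow a K \<le> real K powr (a + 1)"
    proof (cases K)
      case 0 then show ?thesis by (simp add: Spow_def)
    next
      case (Suc m)
      then have "(a + 1) * Spow a K \<le> real m powr (a + 1)"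
        using Spow_bounds(2)[of a m] assms by simp
      also have "\<dots> \<le> real K powr (a + 1)" using Suc assms by (intro powr_mono2) auto
      finally show ?thesis .
    qed
    then have "Spow a K \<le> real K powr (a + 1) / (a + 1)"
      using assms by (simp add: pos_le_divide_eq mult.commute)
    then show ?thesis by (intro divide_right_mono mult_left_mono) auto
  qed
  also have "\<dots> = 2 / (a + 1) * (real K / real n) powr (a + 1)"
    by (simp add: powr_divide)
  finally show ?thesis .
qed

theorem lemma2p1:
  fixes \<gamma> :: real and k :: "nat \<Rightarrow> nat"
  assumes "2 < \<gamma>" and "\<gamma> < 3"
    and "(\<lambda>n. real (k n)) \<in> o(\<lambda>n. real n)"
  shows "summable (\<lambda>i. 1 / real (Suc i) - real (Suc i) / ((real (Suc i) + 1) * (real (Suc i) + 2 - \<gamma>)))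
    \<and> (\<lambda>n. (harm n :: real)
         - (\<Sum>i = k n..n - 1.
              ((real i / real n) / (1 - real i / real n)
                 - ln (1 + (real i / real n) / (1 - real i / real n)))
              * (real n / real i) powr \<gamma> * (1 / real n)))
      \<longlonglongrightarrow> (\<Sum>i. 1 / real (Suc i) - real (Suc i) / ((real (Suc i) + 1) * (real (Suc i) + 2 - \<gamma>)))"
proof -
  define a where "a = 2 - \<gamma>"
  have a1: "-1 < a" "a < 0" using assms unfolding a_def by auto
  define l where "l m = 1/(real m + a + 1)/(real m + 2) - (1/(real m + a + 1) - 1/(real m + 1))" for m
  define t where "t m = 1/(real m + a + 1) - 1/(real m + a + 2)" for m
  have "summable (\<lambda>j. t (j + 0))" using tele[OF a1(1), of 0] unfolding t_def by (auto simp: sums_iff)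
  then have tsum: "summable t" by simp
  have sl: "summable l"
  proof (rule summable_comparison_test')
    show "summable (\<lambda>m. 3 * t m)" using tsum by (rule summable_mult)
    show "norm (l m) \<le> 3 * t m" for m
      unfolding l_def t_def real_norm_def by (rule l_bound) (use a1 in auto)
  qed
  have leq: "(\<lambda>i. 1 / real (Suc i) - real (Suc i) / ((real (Suc i) + 1) * (real (Suc i) + 2 - \<gamma>))) = l"
  proof
    fix m
    have p: "real m + a + 1 > 0" "real m + 3 - \<gamma> > 0" using a1 assms unfolding a_def by auto
    have e: "real (Suc m) + 2 - \<gamma> = real m + a + 1" unfolding a_def by simp
    have gen: "1/(y+1) - (y+1)/((y+1+1)*A) = 1/A/(y+2) - (1/A - 1/(y+1))"
      if "A > 0" "y \<ge> 0" for A y :: real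
    proof -
      have g2: "1/B - B/((B+1)*A) = 1/A/(B+1) - (1/A - 1/B)" if "B > 0" for B :: real
      proof -
        have AB: "A * B > 0" using that \<open>A > 0\<close> by simp
        have "B + 1 \<noteq> 0" "B \<noteq> 0" "A \<noteq> 0" "A + A * B \<noteq> 0" "A * B + A \<noteq> 0"
          using that \<open>A > 0\<close> AB by linarith+
        moreover have "A * B + A * (B * B) \<noteq> 0" "A * (A * B) + A * (A * (B * B)) \<noteq> 0"
        proof -
          have "A * (B * B) > 0" "A * (A * B) > 0" "A * (A * (B * B)) > 0" using that \<open>A > 0\<close> by simp_all
          then show "A * B + A * (B * B) \<noteq> 0" "A * (A * B) + A * (A * (B * B)) \<noteq> 0" using AB by linarith+
        qed
        ultimately show ?thesis by (simp add: field_simps)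
      qed
      have "y + 2 = (y + 1) + 1" by simp
      then show ?thesis using g2[of "y+1"] that by simp
    qed
    show "1 / real (Suc m) - real (Suc m) / ((real (Suc m) + 1) * (real (Suc m) + 2 - \<gamma>)) = l m"
    proof -
      have e2: "real m + 3 - \<gamma> = 1 + (a + real m)" unfolding a_def by simp
      show ?thesis unfolding e l_def of_nat_Suc using gen[OF p(1), of "real m"] by (simp add: add_ac e2)
    qed
  qed
  define s where "s n = (\<Sum>i\<in>{1..<n}. psi a (real i / real n)) / real n
                       - (\<Sum>i\<in>{1..<n}. phi a (real i / real n)) / real n" for n
  have slim: "s \<longlonglongrightarrow> suminf l"
  proof (rule unif_tail[where f = "\<lambda>n m. Rs (real m + a) n / (real m + 2) - (Rs (real m + a) n - Rs (real m) n)"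
                          and e = "\<lambda>M. 1 / (real M + a + 1)"])
    show "(\<lambda>n. Rs (real m + a) n / (real m + 2) - (Rs (real m + a) n - Rs (real m) n)) \<longlonglongrightarrow> l m" for m
    proof -
      have "(\<lambda>n. Rs (real m + a) n / (real m + 2) - (Rs (real m + a) n - Rs (real m) n))
            \<longlonglongrightarrow> 1 / (real m + a + 1) / (real m + 2) - (1 / (real m + a + 1) - 1 / (real m + 1))"
      proof -
        have r1: "(\<lambda>n. Rs (real m + a) n) \<longlonglongrightarrow> 1 / (real m + a + 1)"
          using Rs_lim[of "real m + a"] a1 by simp
        have r2: "(\<lambda>n. Rs (real m) n) \<longlonglongrightarrow> 1 / (real m + 1)"
          using Rs_lim[of "real m"] by simp
        show ?thesis by (intro tendsto_intros r1 r2) simp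
      qed
      then show ?thesis unfolding l_def .
    qed
    show "\<bar>s n - (\<Sum>m<M. Rs (real m + a) n / (real m + 2) - (Rs (real m + a) n - Rs (real m) n))\<bar>
          \<le> 1 / (real M + a + 1)" for M n
    proof -
      have "s n - (\<Sum>m<M. Rs (real m + a) n / (real m + 2) - (Rs (real m + a) n - Rs (real m) n))
         = ((\<Sum>i\<in>{1..<n}. psi a (real i / real n)) / real n - (\<Sum>m<M. Rs (real m + a) n / (real m + 2)))
         - ((\<Sum>i\<in>{1..<n}. phi a (real i / real n)) / real n - (\<Sum>m<M. Rs (real m + a) n - Rs (real m) n))"
        unfolding s_def by (simp add: sum_subtractf)
      then show ?thesis using P_tail[OF a1, of n M] W_tail[OF a1, of n M]
        unfolding abs_le_iff by linarith
    qed
    show "(\<lambda>M. 1 / (real M + a + 1)) \<longlonglongrightarrow> 0"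
    proof -
      have "(\<lambda>M. 1 / ((a + 1) + real M)) \<longlonglongrightarrow> 0"
        by (intro tendsto_divide_0[OF tendsto_const] filterlim_at_top_imp_at_infinity
             filterlim_tendsto_add_at_top[OF tendsto_const filterlim_real_sequentially])
      then show ?thesis by (simp add: add_ac)
    qed
  qed (rule sl)
  define T where "T n i = ((real i / real n) / (1 - real i / real n)
                 - ln (1 + (real i / real n) / (1 - real i / real n)))
              * (real n / real i) powr \<gamma> * (1 / real n)" for n i
  define K where "K n = (\<Sum>i\<in>{1..<k n}. T n i)" for n
  have kn: "(\<lambda>n. real (k n) / real n) \<longlonglongrightarrow> 0"
    using smalloD_tendsto[OF assms(3)] by simp
  have Klim: "K \<longlonglongrightarrow> 0"
  proof (rule tendsto_sandwich[rotated 2])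
    show "(\<lambda>n. 0) \<longlonglongrightarrow> (0::real)" by simp
    show "(\<lambda>n. 2 / (a + 1) * (real (k n) / real n) powr (a + 1)) \<longlonglongrightarrow> 0"
    proof -
      have "(\<lambda>n. (real (k n) / real n) powr (a + 1)) \<longlonglongrightarrow> 0"
        by (rule tendsto_zero_powrI[OF kn tendsto_const]) (use a1 in auto)
      then show ?thesis using tendsto_mult_right_zero by blast
    qed
    have ev: "eventually (\<lambda>n. real (k n) / real n < 1/2 \<and> n \<ge> 1) sequentially"
      using order_tendstoD(2)[OF kn, of "1/2"] eventually_ge_at_top[of 1]
      by (auto intro: eventually_conj)
    have Tb: "0 \<le> T n i \<and> T n i \<le> 2 * (real i / real n) powr a * (1 / real n)"
      if "real (k n) / real n < 1/2" "n \<ge> 1" "i \<in> {1..<k n}" for n i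
    proof -
      define x where "x = real i / real n"
      have x: "0 < x" "x \<le> 1/2" unfolding x_def using that
        by (auto simp: divide_right_mono less_imp_le order.trans[rotated])
      have nx: "real n / real i = 1 / x" unfolding x_def by simp
      have "T n i = (x / (1 - x) - ln (1 + x / (1 - x))) * (1 / x) powr \<gamma> * (1 / real n)"
        unfolding T_def nx x_def[symmetric] ..
      moreover have "2 - \<gamma> = a" unfolding a_def ..
      ultimately show ?thesis using T_bounds[OF x, of \<gamma>] unfolding x_def[symmetric]
        by (auto intro: divide_right_mono)
    qed
    show "eventually (\<lambda>n. 0 \<le> K n) sequentially"
      using ev
    proof eventually_elim
      case (elim n)
      show ?case unfolding K_def using Tb elim by (intro sum_nonneg) blast
    qed
    show "eventually (\<lambda>n. K n \<le> 2 / (a + 1) * (real (k n) / real n) powr (a + 1)) sequentially"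
      using ev
    proof eventually_elim
      case (elim n)
      have "K n \<le> (\<Sum>i\<in>{1..<k n}. 2 * (real i / real n) powr a * (1 / real n))"
        unfolding K_def using Tb elim by (intro sum_mono) auto
      also have "\<dots> \<le> 2 / (a + 1) * (real (k n) / real n) powr (a + 1)"
        using K_bound[OF a1] elim by auto
      finally show ?case .
    qed
  qed
  have T0: "T n 0 = 0" for n unfolding T_def by simp
  have main_eq: "eventually (\<lambda>n. harm n - (\<Sum>i = k n..n - 1. T n i) = 1 / real n + s n + K n) sequentially"
  proof -
    have ev: "eventually (\<lambda>n. real (k n) / real n < 1 \<and> n \<ge> 1) sequentially"
      using order_tendstoD(2)[OF kn, of 1] eventually_ge_at_top[of 1]
      by (auto intro: eventually_conj)
    show ?thesis using ev
    proof eventually_elim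
      case (elim n)
      then have "real (k n) < real n" using divide_less_eq_1_pos[of "real n" "real (k n)"] by simp
      then have kle: "k n \<le> n" by simp
      have shift: "(\<Sum>i\<in>{0..<m}. T n i) = (\<Sum>i\<in>{1..<m}. T n i)" for m
        by (cases m) (simp_all add: sum.atLeast_Suc_lessThan T0)
      have "(\<Sum>i = k n..n - 1. T n i) = (\<Sum>i\<in>{k n..<n}. T n i)"
        using elim by (cases n) (auto simp: atLeastLessThanSuc_atLeastAtMost)
      also have "\<dots> = (\<Sum>i\<in>{0..<n}. T n i) - (\<Sum>i\<in>{0..<k n}. T n i)"
        using sum.atLeastLessThan_concat[of 0 "k n" n "T n"] kle by simp
      also have "\<dots> = (\<Sum>i\<in>{1..<n}. T n i) - K n"
        unfolding shift K_def ..
      finally have S1: "(\<Sum>i = k n..n - 1. T n i) = (\<Sum>i\<in>{1..<n}. T n i) - K n" .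
      have S2: "(\<Sum>i\<in>{1..<n}. 1 / (real n - real i)) - (\<Sum>i\<in>{1..<n}. T n i) = s n"
      proof -
        have "(\<Sum>i\<in>{1..<n}. 1 / (real n - real i)) - (\<Sum>i\<in>{1..<n}. T n i)
            = (\<Sum>i\<in>{1..<n}. (psi a (real i / real n) - phi a (real i / real n)) / real n)"
          unfolding sum_subtractf[symmetric]
        proof (intro sum.cong refl)
          fix i assume i: "i \<in> {1..<n}"
          define x where "x = real i / real n"
          have x: "0 < x" "x < 1" using xi_bounds[OF i] unfolding x_def by auto
          have nx: "real n / real i = 1 / x" unfolding x_def by simp
          have n0: "real n > 0" using elim by simp
          have d: "1 / (real n - real i) = 1 / (1 - x) * (1 / real n)"
            unfolding x_def using n0 i by (simp add: field_simps)
          have "1 / (real n - real i) - T n i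
              = (1 / (1 - x) - (x / (1 - x) - ln (1 + x / (1 - x))) * (1 / x) powr \<gamma>) * (1 / real n)"
            unfolding d T_def nx x_def[symmetric] by (simp add: algebra_simps)
          also have "\<dots> = (psi a x - phi a x) / real n"
            unfolding term_id[OF x] a_def by simp
          finally show "1 / (real n - real i) - T n i = (psi a (real i / real n) - phi a (real i / real n)) / real n"
            unfolding x_def .
        qed
        also have "\<dots> = s n" unfolding s_def by (simp add: sum_subtractf diff_divide_distrib sum_divide_distrib)
        finally show ?thesis .
      qed
      show ?case using S1 S2 harm_split[of n] elim by simp
    qed
  qed
  have "(\<lambda>n. 1 / real n + s n + K n) \<longlonglongrightarrow> 0 + suminf l + 0"
    by (intro tendsto_add slim Klim lim_inverse_n')
  then have "(\<lambda>n. harm n - (\<Sum>i = k n..n - 1. T n i)) \<longlonglongrightarrow> suminf l"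
    using main_eq by (simp add: tendsto_cong)
  then show ?thesis using sl unfolding leq T_def by simp
qed

end
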